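(* Let $X$ be a finite set, let $k\ge 2$ be an integer, and let $\bm{c}$ be a choice function defined on the complete collection $\mathcal{B}=2^X$ of all non-empty subsets of $X$ (i.e. $\bm{c}(B)\in B$ for every non-empty $B\subseteq X$). Then $(\mathcal{B},\bm{c})$ is rationalizable with $k^{th}$-order choice under limited attention if and only if $\bm{c}$ satisfies both of the following axioms: (SARP$^k$) for all $x,y\in X$: if $x$ is $k^{th}$-order indirectly chosen over $y$, then $y$ is not $k^{th}$-order directly chosen over $x$; (WARP(LA$^k$)) for all non-empty $S,T\subseteq X$ and all $x,y\in S\cap T$ with $|T|\le k$: if $x=\bm{c}(S)$ and $y=\bm{c}(T)$, then $x=\bm{c}(S\setminus\{y\})$.
   Context: A strict preference relation on $X$ is a complete, transitive and asymmetric binary relation $\succ$. An attention filter is a map $\Gamma$ from non-empty subsets of $X$ to subsets of $X$ such that $\Gamma(B)\subseteq B$ for every $B$, and $\Gamma(B)=\Gamma(B\setminus\{x\})$ for every $B$ and every $x\in B\setminus\Gamma(B)$. A data set $(\mathcal{B},\bm{c})$, where $\mathcal{B}$ is a collection of non-empty subsets of $X$ and $\bm{c}(B)\in B$ for $B\in\mathcal{B}$, is rationalizable with $k^{th}$-order choice under limited attention if there exist a strict preference relation $\succ$ and an attention filter $\Gamma$ with $|\Gamma(B)|\ge\min\{|B|,k\}$ for all non-empty $B\subseteq X$, such that for every $B\in\mathcal{B}$, $\bm{c}(B)$ is the $\succ$-maximal element of $\Gamma(B)$. We say $x_1$ is $k^{th}$-order directly chosen over $x_2$ if there is $B\in\mathcal{B}$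 with $|B|\le k$, $x_1,x_2\in B$ and $x_1=\bm{c}(B)$. We say $x_1$ is $k^{th}$-order indirectly chosen over $x_n$ if there exist $x_2,\dots,x_{n-1}$ such that $x_i$ is $k^{th}$-order directly chosen over $x_{i+1}$ for each $i=1,\dots,n-1$. *)

theory Defs
  imports Main
begin

definition strict_pref :: "'a set \<Rightarrow> ('a \<times> 'a) set \<Rightarrow> bool" where
  "strict_pref X R \<longleftrightarrow> R \<subseteq> X \<times> X \<and> total_on X R \<and> trans R \<and> asym R"

definition attention_filter :: "'a set \<Rightarrow> ('a set \<Rightarrow> 'a set) \<Rightarrow> bool" where
  "attention_filter X \<Gamma> \<longleftrightarrow>
     (\<forall>B. B \<subseteq> X \<and> B \<noteq> {} \<longrightarrow> \<Gamma> B \<subseteq> B) \<and>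
     (\<forall>B x. B \<subseteq> X \<and> x \<in> B - \<Gamma> B \<and> B - {x} \<noteq> {} \<longrightarrow> \<Gamma> B = \<Gamma> (B - {x}))"

definition rationalizable_k :: "'a set \<Rightarrow> nat \<Rightarrow> 'a set set \<Rightarrow> ('a set \<Rightarrow> 'a) \<Rightarrow> bool" where
  "rationalizable_k X k \<BB> c \<longleftrightarrow>
     (\<exists>R \<Gamma>. strict_pref X R \<and> attention_filter X \<Gamma> \<and>
        (\<forall>B. B \<subseteq> X \<and> B \<noteq> {} \<longrightarrow> card (\<Gamma> B) \<ge> min (card B) k) \<and>
        (\<forall>B\<in>\<BB>. c B \<in> \<Gamma> B \<and> (\<forall>y\<in>\<Gamma> B. y \<noteq> c B \<longrightarrow> (c B, y) \<in> R)))"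

definition directly_chosen :: "nat \<Rightarrow> 'a set set \<Rightarrow> ('a set \<Rightarrow> 'a) \<Rightarrow> 'a \<Rightarrow> 'a \<Rightarrow> bool" where
  "directly_chosen k \<BB> c x1 x2 \<longleftrightarrow>
     (\<exists>B\<in>\<BB>. card B \<le> k \<and> x1 \<in> B \<and> x2 \<in> B \<and> x1 = c B)"

definition indirectly_chosen :: "nat \<Rightarrow> 'a set set \<Rightarrow> ('a set \<Rightarrow> 'a) \<Rightarrow> 'a \<Rightarrow> 'a \<Rightarrow> bool" where
  "indirectly_chosen k \<BB> c = (directly_chosen k \<BB> c)\<^sup>+\<^sup>+"

definition SARP_k :: "'a set \<Rightarrow> nat \<Rightarrow> 'a set set \<Rightarrow> ('a set \<Rightarrow> 'a) \<Rightarrow> bool" where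
  "SARP_k X k \<BB> c \<longleftrightarrow>
     (\<forall>x\<in>X. \<forall>y\<in>X. x \<noteq> y \<longrightarrow> indirectly_chosen k \<BB> c x y \<longrightarrow> \<not> directly_chosen k \<BB> c y x)"

definition WARP_LA_k :: "'a set \<Rightarrow> nat \<Rightarrow> ('a set \<Rightarrow> 'a) \<Rightarrow> bool" where
  "WARP_LA_k X k c \<longleftrightarrow>
     (\<forall>S T x y. S \<subseteq> X \<and> S \<noteq> {} \<and> T \<subseteq> X \<and> T \<noteq> {} \<and> x \<in> S \<inter> T \<and> y \<in> S \<inter> T \<and>
        x \<noteq> y \<and> card T \<le> k \<and> x = c S \<and> y = c T \<longrightarrow> x = c (S - {y}))"

end

theory Submission
  imports Defs
begin

lemma asymE': "asym R \<Longrightarrow> (x, y) \<in> R \<Longrightarrow> (y, x) \<in> R \<Longrightarrow> False"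
  unfolding asym_on_def by blast

lemma necessity:
  fixes X :: "'a set" and k :: nat and c :: "'a set \<Rightarrow> 'a"
  assumes fin: "finite X"
    and rat: "rationalizable_k X k {B. B \<subseteq> X \<and> B \<noteq> {}} c"
  shows "SARP_k X k {B. B \<subseteq> X \<and> B \<noteq> {}} c \<and> WARP_LA_k X k c"
proof -
  let ?BB = "{B. B \<subseteq> X \<and> B \<noteq> {}}"
  obtain R \<Gamma> where H: "strict_pref X R \<and> attention_filter X \<Gamma> \<and>
        (\<forall>B. B \<subseteq> X \<and> B \<noteq> {} \<longrightarrow> card (\<Gamma> B) \<ge> min (card B) k) \<and>
        (\<forall>B\<in>?BB. c B \<in> \<Gamma> B \<and> (\<forall>y\<in>\<Gamma> B. y \<noteq> c B \<longrightarrow> (c B, y) \<in> R))"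
    using rat unfolding rationalizable_k_def by (elim exE) (rule that)
  have sp: "strict_pref X R" and af: "attention_filter X \<Gamma>" using H by simp_all
  have cardG: "\<And>B. B \<subseteq> X \<Longrightarrow> B \<noteq> {} \<Longrightarrow> card (\<Gamma> B) \<ge> min (card B) k"
    using H by simp
  have ch: "\<And>B. B \<in> ?BB \<Longrightarrow> c B \<in> \<Gamma> B \<and> (\<forall>y\<in>\<Gamma> B. y \<noteq> c B \<longrightarrow> (c B, y) \<in> R)"
    using H by (elim conjE) (rule bspec)
  have trR: "trans R" and asR: "asym R" using sp unfolding strict_pref_def by auto
  have sub: "\<And>B. B \<subseteq> X \<Longrightarrow> B \<noteq> {} \<Longrightarrow> \<Gamma> B \<subseteq> B" using af unfolding attention_filter_def by blast
  have filt: "\<And>B x. B \<subseteq> X \<Longrightarrow> x \<in> B - \<Gamma> B \<Longrightarrow> B - {x} \<noteq> {} \<Longrightarrow> \<Gamma> B = \<Gamma> (B - {x})"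
    using af unfolding attention_filter_def by blast
  have L1: "\<Gamma> B = B" if "B \<subseteq> X" "B \<noteq> {}" "card B \<le> k" for B
  proof -
    have fB: "finite B" using that fin finite_subset by blast
    have "card (\<Gamma> B) \<ge> card B" using cardG[OF that(1,2)] that(3) by simp
    moreover have "card (\<Gamma> B) \<le> card B" using card_mono[OF fB sub[OF that(1,2)]] .
    ultimately have "card (\<Gamma> B) = card B" by (rule antisym[rotated])
    then show ?thesis using card_subset_eq[OF fB sub[OF that(1,2)]] by blast
  qed
  have L2: "(a, b) \<in> R" if dc: "directly_chosen k ?BB c a b" and abne: "a \<noteq> b" for a b
  proof -
    obtain B where B: "B \<in> ?BB" "card B \<le> k" "a \<in> B" "b \<in> B" "a = c B"
      using dc unfolding directly_chosen_def by blast
    have "\<Gamma> B = B" using L1 B by blast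
    then have bG: "b \<in> \<Gamma> B" using B(4) by simp
    have bne: "b \<noteq> c B" using B(5) abne by simp
    have "(c B, b) \<in> R" using ch[OF B(1)] bG bne by blast
    then show ?thesis using B(5) by simp
  qed
  have L3: "a = b \<or> (a, b) \<in> R" if "indirectly_chosen k ?BB c a b" for a b
    using that unfolding indirectly_chosen_def
  proof (induction rule: tranclp_induct)
    case (base y) then show ?case using L2 by blast
  next
    case (step y z)
    show ?case
    proof (cases "y = z")
      case True then show ?thesis using step(3) by simp
    next
      case False
      then have "(y, z) \<in> R" using L2[OF step(2)] by blast
      then show ?thesis using step(3) trR by (metis transD)
    qed
  qed
  have SARP: "SARP_k X k ?BB c"
    unfolding SARP_k_def
  proof (intro ballI impI notI)
    fix x y assume xy: "x \<in> X" "y \<in> X" "x \<noteq> y" "indirectly_chosen k ?BB c x y"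
      and dyx: "directly_chosen k ?BB c y x"
    have "(x, y) \<in> R" using L3[OF xy(4)] xy(3) by blast
    moreover have "(y, x) \<in> R" using L2[OF dyx] xy(3) by metis
    ultimately show False using asymE'[OF asR] by blast
  qed
  have WARP: "WARP_LA_k X k c"
    unfolding WARP_LA_k_def
  proof (intro allI impI)
    fix S T x y
    assume a: "S \<subseteq> X \<and> S \<noteq> {} \<and> T \<subseteq> X \<and> T \<noteq> {} \<and> x \<in> S \<inter> T \<and> y \<in> S \<inter> T \<and>
        x \<noteq> y \<and> card T \<le> k \<and> x = c S \<and> y = c T"
    have GT: "\<Gamma> T = T" using L1 a by blast
    have yx: "(y, x) \<in> R" using ch[of T] a GT by auto
    have "y \<notin> \<Gamma> S"
    proof
      assume "y \<in> \<Gamma> S"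
      then have "(x, y) \<in> R" using ch[of S] a by auto
      then show False using yx asymE'[OF asR] by blast
    qed
    then have GS: "\<Gamma> S = \<Gamma> (S - {y})" using filt[of S y] a by blast
    have S'BB: "S - {y} \<in> ?BB" using a by blast
    have m: "c (S - {y}) \<in> \<Gamma> S" using ch[OF S'BB] GS by simp
    have xG: "x \<in> \<Gamma> S" using ch[of S] a by auto
    show "x = c (S - {y})"
    proof (rule ccontr)
      assume ne: "x \<noteq> c (S - {y})"
      have "(x, c (S - {y})) \<in> R" using ch[of S] a m ne by auto
      moreover have "(c (S - {y}), x) \<in> R" using ch[OF S'BB] GS xG ne by auto
      ultimately show False using asymE'[OF asR] by blast
    qed
  qed
  show ?thesis using SARP WARP by blast
qed

lemma sufficiency:
  fixes X :: "'a set" and k :: nat and c :: "'a set \<Rightarrow> 'a"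
  assumes fin: "finite X" and k2: "k \<ge> 2"
    and cin: "\<And>B. B \<subseteq> X \<Longrightarrow> B \<noteq> {} \<Longrightarrow> c B \<in> B"
    and sarp: "SARP_k X k {B. B \<subseteq> X \<and> B \<noteq> {}} c" and warp: "WARP_LA_k X k c"
  shows "rationalizable_k X k {B. B \<subseteq> X \<and> B \<noteq> {}} c"
proof -
  let ?BB = "{B. B \<subseteq> X \<and> B \<noteq> {}}"
  define D where "D = (\<lambda>a b. a \<noteq> b \<and> directly_chosen k ?BB c a b)"
  define P where "P = D\<^sup>+\<^sup>+"
  have DX: "a \<in> X" "b \<in> X" if "D a b" for a b
    using that unfolding D_def directly_chosen_def by blast+
  have PX: "a \<in> X" if "P a b" for a b
    using that unfolding P_def by (induction rule: tranclp_induct) (auto dest: DX)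
  have Pind: "indirectly_chosen k ?BB c a b" if "P a b" for a b
  proof -
    show ?thesis using that unfolding P_def indirectly_chosen_def
      by (induction rule: tranclp_induct) (auto simp: D_def)
  qed
  have Pirr: "\<not> P a a" for a
  proof
    assume "P a a"
    then obtain z where z: "D\<^sup>*\<^sup>* a z" "D z a" unfolding P_def by (metis tranclp.cases rtranclp.rtrancl_refl tranclp_into_rtranclp)
    have "a \<noteq> z" using z(2) unfolding D_def by blast
    then have "P a z" using z(1) unfolding P_def by (metis rtranclpD)
    then show False using sarp Pind[of a z] z(2) DX[OF z(2)] \<open>a \<noteq> z\<close>
      unfolding SARP_k_def D_def by blast
  qed
  have Ptr: "P a c'" if "P a b" "P b c'" for a b c'
    using that unfolding P_def by auto
  define h where "h = (\<lambda>z. card {w \<in> X. P w z})"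
  have hlt: "h a < h b" if "P a b" for a b
  proof -
    have "{w \<in> X. P w a} \<subset> {w \<in> X. P w b}"
      using Ptr[OF _ that] that PX[OF that] Pirr[of a] by blast
    then show ?thesis unfolding h_def using fin by (simp add: psubset_card_mono)
  qed
  obtain f :: "'a \<Rightarrow> nat" where inj: "inj_on f X"
    using fin finite_imp_inj_to_nat_seg by blast
  define R where "R = {(x, y). x \<in> X \<and> y \<in> X \<and> (h x < h y \<or> (h x = h y \<and> f x < f y))}"
  have asR: "asym R" unfolding R_def asym_on_def by auto
  have irr: "(a, a) \<notin> R" for a unfolding R_def by auto
  have trR: "trans R" unfolding R_def trans_def by auto
  have totR: "total_on X R" unfolding total_on_def
  proof (intro ballI impI)
    fix x y assume xy: "x \<in> X" "y \<in> X" "x \<noteq> y"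
    then have "f x \<noteq> f y" using inj inj_on_eq_iff by metis
    then show "(x, y) \<in> R \<or> (y, x) \<in> R" using xy unfolding R_def by auto
  qed
  have RX: "R \<subseteq> X \<times> X" unfolding R_def by auto
  have spR: "strict_pref X R" unfolding strict_pref_def using asR trR totR RX by blast
  have DR: "(a, b) \<in> R" if "directly_chosen k ?BB c a b" "a \<noteq> b" for a b
  proof -
    have "D a b" using that D_def by blast
    then have "P a b" unfolding P_def by auto
    then show ?thesis using hlt DX \<open>D a b\<close> unfolding R_def by blast
  qed
  have K: "c (B - {x}) = c B" if B: "B \<subseteq> X" "B \<noteq> {}" "x \<in> B" "(x, c B) \<in> R" for B x
  proof -
    have ne: "x \<noteq> c B" using irr B(4) by blast
    have cB: "c B \<in> B" using cin B by blast
    let ?T = "{x, c B}"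
    have Tsub: "?T \<subseteq> X" using B cB by blast
    have cardT: "card ?T \<le> k" using k2 ne by simp
    have "c ?T \<in> ?T" using cin[OF Tsub] by blast
    moreover have "c ?T \<noteq> c B"
    proof
      assume "c ?T = c B"
      then have "directly_chosen k ?BB c (c B) x"
        unfolding directly_chosen_def using Tsub cardT by (intro bexI[of _ ?T]) auto
      then have "(c B, x) \<in> R" using DR ne by metis
      then show False using asymE'[OF asR] B(4) by blast
    qed
    ultimately have cT: "c ?T = x" by blast
    have "c B = c (B - {x})"
      using warp[unfolded WARP_LA_k_def, rule_format, of B ?T "c B" x] B cB ne Tsub cT cardT by auto
    then show ?thesis by simp
  qed
  define U where "U = (\<lambda>B. {x \<in> B. (x, c B) \<in> R})"
  have W: "c (B - W) = c B" if "finite W" "W \<subseteq> U B" "B \<subseteq> X" "B \<noteq> {}" for W B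
    using that(1,2)
  proof (induction W rule: finite_induct)
    case empty then show ?case by simp
  next
    case (insert w W)
    have IH: "c (B - W) = c B" using insert by blast
    have cB: "c B \<in> B - W" using cin that(3,4) insert(4) irr unfolding U_def by blast
    have wU: "w \<in> B - W" "(w, c B) \<in> R" using insert unfolding U_def by auto
    have "c (B - W - {w}) = c (B - W)"
      using K[of "B - W" w] that(3) cB wU IH by auto
    moreover have "B - insert w W = B - W - {w}" by blast
    ultimately show ?case using IH by simp
  qed
  define \<Gamma> where "\<Gamma> = (\<lambda>B. B - U B)"
  have af: "attention_filter X \<Gamma>"
    unfolding attention_filter_def
  proof (intro conjI allI impI)
    fix B assume "B \<subseteq> X \<and> B \<noteq> {}" then show "\<Gamma> B \<subseteq> B" unfolding \<Gamma>_def by blast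
  next
    fix B x assume a: "B \<subseteq> X \<and> x \<in> B - \<Gamma> B \<and> B - {x} \<noteq> {}"
    then have xU: "x \<in> B" "(x, c B) \<in> R" unfolding \<Gamma>_def U_def by auto
    have e: "c (B - {x}) = c B" using K[of B x] a xU by blast
    show "\<Gamma> B = \<Gamma> (B - {x})" unfolding \<Gamma>_def U_def e using xU by auto
  qed
  have cardG: "card (\<Gamma> B) \<ge> min (card B) k" if B: "B \<subseteq> X" "B \<noteq> {}" for B
  proof (cases "U B = {}")
    case True then show ?thesis unfolding \<Gamma>_def by simp
  next
    case False
    then obtain u where u: "u \<in> U B" by blast
    have fB: "finite B" using B fin finite_subset by blast
    have fU: "finite (U B)" using fB unfolding U_def by simp
    have UB: "U B \<subseteq> B" unfolding U_def by blast
    have "card (B - U B) \<ge> k"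
    proof (rule ccontr)
      assume "\<not> k \<le> card (B - U B)"
      let ?B' = "B - (U B - {u})"
      have eq: "?B' = insert u (B - U B)" using u UB by blast
      have "card ?B' = Suc (card (B - U B))" unfolding eq using fB u by simp
      then have cB': "card ?B' \<le> k" using \<open>\<not> k \<le> card (B - U B)\<close> by simp
      have cc: "c ?B' = c B" using W[of "U B - {u}" B] fU B by blast
      have uR: "(u, c B) \<in> R" and uB: "u \<in> B" using u unfolding U_def by auto
      have cBin: "c B \<in> ?B'" using cin[OF B] uR irr unfolding eq U_def by auto
      have "directly_chosen k ?BB c (c B) u"
        unfolding directly_chosen_def using B cB' cc cBin eq
        by (intro bexI[of _ ?B']) auto
      then have "(c B, u) \<in> R" using DR uR irr by metis
      then show False using asymE'[OF asR] uR by blast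
    qed
    then show ?thesis unfolding \<Gamma>_def by simp
  qed
  have ch: "c B \<in> \<Gamma> B \<and> (\<forall>y\<in>\<Gamma> B. y \<noteq> c B \<longrightarrow> (c B, y) \<in> R)" if "B \<in> ?BB" for B
  proof -
    have cB: "c B \<in> B" using cin that by blast
    have "c B \<in> \<Gamma> B" unfolding \<Gamma>_def U_def using cB irr by blast
    moreover have "(c B, y) \<in> R" if "y \<in> \<Gamma> B" "y \<noteq> c B" for y
      using that totR cB \<open>B \<in> ?BB\<close> unfolding \<Gamma>_def U_def total_on_def by blast
    ultimately show ?thesis by blast
  qed
  show ?thesis unfolding rationalizable_k_def
    using spR af cardG ch by blast
qed

theorem theorem1:
  fixes X :: "'a set" and k :: nat and c :: "'a set \<Rightarrow> 'a"
  assumes "finite X" and "k \<ge> 2"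
    and "\<And>B. B \<subseteq> X \<Longrightarrow> B \<noteq> {} \<Longrightarrow> c B \<in> B"
  shows "rationalizable_k X k {B. B \<subseteq> X \<and> B \<noteq> {}} c \<longleftrightarrow>
         SARP_k X k {B. B \<subseteq> X \<and> B \<noteq> {}} c \<and> WARP_LA_k X k c"
proof
  assume "rationalizable_k X k {B. B \<subseteq> X \<and> B \<noteq> {}} c"
  then show "SARP_k X k {B. B \<subseteq> X \<and> B \<noteq> {}} c \<and> WARP_LA_k X k c"
    by (rule necessity[OF assms(1)])
next
  assume "SARP_k X k {B. B \<subseteq> X \<and> B \<noteq> {}} c \<and> WARP_LA_k X k c"
  then show "rationalizable_k X k {B. B \<subseteq> X \<and> B \<noteq> {}} c"
    using sufficiency[OF assms] by blast
qed

end
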